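(* For any rooted binary phylogenetic tree $T$ under the $N_r$ model, $RA_{\rm MP}(T)\ge\frac1r$. Moreover, if $p_e<\frac{r-1}{r}$ for every edge $e$, then $RA_{\rm MP}(T)>\frac1r$.
   Context: A rooted binary phylogenetic tree is a finite tree with a distinguished root vertex $\rho$ of out-degree 2, all edges directed away from $\rho$, and every other vertex of in-degree 1 and out-degree 0 or 2; out-degree-0 vertices are leaves, forming the leaf set $X$. Under the Neyman $r$-state model $N_r$ ($r\ge2$) on a state set $\mathcal A$ of size $r$, each edge $e$ carries a substitution probability $p_e\in[0,\frac{r-1}{r}]$; given $F(\rho)$, states propagate independently along edges: for an edge $(u,v)$, $F(v)=F(u)$ with probability $1-p_e$, and otherwise $F(v)$ is uniform among the $r-1$ other states; $f=F|_X$. Fitch sets: each leaf $x$ gets $\{f(x)\}$; a vertex with children $v_1,v_2$ gets $\mathrm{FS}(v_1)\cap\mathrm{FS}(v_2)$ if nonempty, else the union. $\mathrm{MP}(f,T)$ is a uniformly random element of the Fitch set of $\rho$, and $RA_{\rm MP}(T)=\mathbb P(\mathrm{MP}(f,T)=\alpha\mid F(\rho)=\alpha)$. *)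

theory Defs
  imports "HOL-Probability.Probability"
begin

text \<open>A Node carries the substitution probability of the edge to its left child,
  the left subtree, the probability of the edge to its right child, and the
  right subtree. Leaves are ordered left to right; a character on the leaf set
  is a list of states of length nleaves T. The state set is {0..<r}.\<close>

datatype ptree = Leaf | Node real ptree real ptree

fun nleaves :: "ptree \<Rightarrow> nat" where
  "nleaves Leaf = 1"
| "nleaves (Node p l q rt) = nleaves l + nleaves rt"

fun edge_probs :: "ptree \<Rightarrow> real set" where
  "edge_probs Leaf = {}"
| "edge_probs (Node p l q rt) = {p, q} \<union> edge_probs l \<union> edge_probs rt"

definition nr_step :: "nat \<Rightarrow> real \<Rightarrow> nat \<Rightarrow> nat pmf" where
  "nr_step r p a = bind_pmf (bernoulli_pmf p)
     (\<lambda>change. if change then pmf_of_set ({..<r} - {a}) else return_pmf a)"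

fun leaf_char :: "nat \<Rightarrow> ptree \<Rightarrow> nat \<Rightarrow> nat list pmf" where
  "leaf_char r Leaf a = return_pmf [a]"
| "leaf_char r (Node p l q rt) a =
     bind_pmf (nr_step r p a) (\<lambda>b.
     bind_pmf (nr_step r q a) (\<lambda>c.
     bind_pmf (leaf_char r l b) (\<lambda>xs.
     bind_pmf (leaf_char r rt c) (\<lambda>ys. return_pmf (xs @ ys)))))"

fun fitch :: "ptree \<Rightarrow> nat list \<Rightarrow> nat set" where
  "fitch Leaf xs = {hd xs}"
| "fitch (Node p l q rt) xs =
     (let A = fitch l (take (nleaves l) xs); B = fitch rt (drop (nleaves l) xs)
      in if A \<inter> B \<noteq> {} then A \<inter> B else A \<union> B)"

text \<open>MP(f,T): uniformly random element of the root Fitch set;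
  RA_MP(T) = P(MP(f,T) = alpha | F(rho) = alpha).\<close>
definition RA_MP :: "nat \<Rightarrow> ptree \<Rightarrow> nat \<Rightarrow> real" where
  "RA_MP r T \<alpha> = pmf (bind_pmf (leaf_char r T \<alpha>) (\<lambda>xs. pmf_of_set (fitch T xs))) \<alpha>"

end

theory Submission
  imports Defs
begin

definition sw :: "nat \<Rightarrow> nat \<Rightarrow> nat \<Rightarrow> nat" where
 "sw \<alpha> \<beta> x = (if x = \<alpha> then \<beta> else if x = \<beta> then \<alpha> else x)"

lemma sw_sw[simp]: "sw \<alpha> \<beta> (sw \<alpha> \<beta> x) = x" by (auto simp: sw_def)
lemma inj_sw: "inj (sw \<alpha> \<beta>)" by (metis injI sw_sw)

lemma sw_image_minus:
  assumes "\<alpha> < r" "\<beta> < r"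
  shows "sw \<alpha> \<beta> ` ({..<r} - {a}) = {..<r} - {sw \<alpha> \<beta> a}"
proof -
  have "sw \<alpha> \<beta> ` {..<r} = {..<r}"
  proof
    show "sw \<alpha> \<beta> ` {..<r} \<subseteq> {..<r}" using assms by (auto simp: sw_def)
    show "{..<r} \<subseteq> sw \<alpha> \<beta> ` {..<r}"
    proof
      fix x assume "x \<in> {..<r}"
      then have "sw \<alpha> \<beta> x \<in> {..<r}" using assms by (auto simp: sw_def)
      then show "x \<in> sw \<alpha> \<beta> ` {..<r}" by (metis image_eqI sw_sw)
    qed
  qed
  then show ?thesis using inj_sw by (simp add: image_set_diff)
qed

lemma minus_nonempty: "2 \<le> r \<Longrightarrow> {..<r::nat} - {a} \<noteq> {}"
proof
  assume "2 \<le> r" "{..<r} - {a} = {}"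
  then have "0 \<in> {..<r} - {a} \<or> 1 \<in> {..<r} - {a}" by auto
  then show False using \<open>{..<r} - {a} = {}\<close> by auto
qed

lemma nr_step_sw:
  assumes "\<alpha> < r" "\<beta> < r" "2 \<le> r"
  shows "nr_step r p (sw \<alpha> \<beta> a) = map_pmf (sw \<alpha> \<beta>) (nr_step r p a)"
  unfolding nr_step_def map_bind_pmf
proof (rule bind_pmf_cong[OF refl])
  fix c
  have "map_pmf (sw \<alpha> \<beta>) (pmf_of_set ({..<r} - {a})) = pmf_of_set (sw \<alpha> \<beta> ` ({..<r} - {a}))"
    by (rule map_pmf_of_set_inj) (use minus_nonempty[OF assms(3), of a] inj_sw[of \<alpha> \<beta>] in \<open>auto intro: inj_on_subset\<close>)
  also have "\<dots> = pmf_of_set ({..<r} - {sw \<alpha> \<beta> a})" by (simp only: sw_image_minus[OF assms(1,2)])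
  finally show "(if c then pmf_of_set ({..<r} - {sw \<alpha> \<beta> a}) else return_pmf (sw \<alpha> \<beta> a)) =
         map_pmf (sw \<alpha> \<beta>) (if c then pmf_of_set ({..<r} - {a}) else return_pmf a)"
    by simp
qed

lemma nr_step_support:
  assumes "a < r" "2 \<le> r"
  shows "set_pmf (nr_step r p a) \<subseteq> {..<r}"
proof
  fix x assume "x \<in> set_pmf (nr_step r p a)"
  then obtain c where c: "x \<in> set_pmf (if c then pmf_of_set ({..<r} - {a}) else return_pmf a)"
    unfolding nr_step_def set_bind_pmf by blast
  have s: "set_pmf (pmf_of_set ({..<r} - {a})) = {..<r} - {a}"
    using minus_nonempty[OF assms(2), of a] by simp
  show "x \<in> {..<r}" using c s assms by (cases c) auto
qed

lemma leaf_char_sw: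
  assumes "\<alpha> < r" "\<beta> < r" "2 \<le> r"
  shows "leaf_char r T (sw \<alpha> \<beta> a) = map_pmf (map (sw \<alpha> \<beta>)) (leaf_char r T a)"
  by (induction T arbitrary: a)
     (simp_all add: nr_step_sw[OF assms] bind_map_pmf map_bind_pmf)

lemma leaf_char_len: "xs \<in> set_pmf (leaf_char r T a) \<Longrightarrow> length xs = nleaves T"
  by (induction T arbitrary: a xs) auto

lemma leaf_char_set: "a < r \<Longrightarrow> 2 \<le> r \<Longrightarrow> xs \<in> set_pmf (leaf_char r T a) \<Longrightarrow> set xs \<subseteq> {..<r}"
proof (induction T arbitrary: a xs)
  case Leaf then show ?case by auto
next
  case (Node p l q rt)
  from Node.prems(3) obtain b c xs1 ys1 where
    o: "b \<in> set_pmf (nr_step r p a)" "c \<in> set_pmf (nr_step r q a)"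
       "xs1 \<in> set_pmf (leaf_char r l b)" "ys1 \<in> set_pmf (leaf_char r rt c)" "xs = xs1 @ ys1"
    by (simp add: set_bind_pmf) blast
  have "b < r" "c < r" using o(1,2) nr_step_support[OF Node.prems(1,2)] by blast+
  then have "set xs1 \<subseteq> {..<r}" "set ys1 \<subseteq> {..<r}"
    using Node.IH(1)[OF _ Node.prems(2) o(3)] Node.IH(2)[OF _ Node.prems(2) o(4)] by auto
  then show ?case using o(5) by simp
qed

lemma nleaves_pos: "nleaves T \<ge> 1"
  by (induction T) auto

lemma fitch_basic: "length xs = nleaves T \<Longrightarrow> fitch T xs \<subseteq> set xs \<and> fitch T xs \<noteq> {}"
proof (induction T arbitrary: xs)
  case Leaf then show ?case by (cases xs) auto
next
  case (Node p l q rt)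
  have h1: "length (take (nleaves l) xs) = nleaves l" and h2: "length (drop (nleaves l) xs) = nleaves rt"
    using Node.prems by auto
  with Node.IH(1)[OF h1] Node.IH(2)[OF h2] show ?case
    using set_take_subset[of "nleaves l" xs] set_drop_subset[of "nleaves l" xs]
    by (auto simp: Let_def)
qed

lemma fitch_map: assumes "inj f" shows "length xs = nleaves T \<Longrightarrow> fitch T (map f xs) = f ` fitch T xs"
proof (induction T arbitrary: xs)
  case Leaf then show ?case by (cases xs) auto
next
  case (Node p l q rt)
  have h1: "length (take (nleaves l) xs) = nleaves l" and h2: "length (drop (nleaves l) xs) = nleaves rt"
    using Node.prems by auto
  with Node.IH(1)[OF h1] Node.IH(2)[OF h2] show ?case
    using assms by (simp add: Let_def take_map drop_map image_Int[OF assms, symmetric] image_Un)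
qed


definition fd :: "nat \<Rightarrow> ptree \<Rightarrow> nat \<Rightarrow> nat set pmf" where
 "fd r T a = map_pmf (fitch T) (leaf_char r T a)"

lemma fd_sw:
  assumes "\<alpha> < r" "\<beta> < r" "2 \<le> r"
  shows "fd r T (sw \<alpha> \<beta> a) = map_pmf ((`) (sw \<alpha> \<beta>)) (fd r T a)"
  unfolding fd_def leaf_char_sw[OF assms] map_pmf_comp
  by (rule map_pmf_cong[OF refl]) (simp add: fitch_map[OF inj_sw] leaf_char_len)

lemma fd_support:
  assumes "a < r" "2 \<le> r" "S \<in> set_pmf (fd r T a)"
  shows "S \<subseteq> {..<r} \<and> S \<noteq> {}"
  using assms fitch_basic[OF leaf_char_len] leaf_char_set unfolding fd_def by fastforce

lemma pmf_bind_fin: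
  assumes "finite A" "set_pmf M \<subseteq> A"
  shows "pmf (bind_pmf M f) x = (\<Sum>a\<in>A. pmf M a * pmf (f a) x)"
  unfolding pmf_bind using assms
  by (subst integral_measure_pmf_real[of A]) (auto simp: mult.commute)

definition comb :: "nat set \<Rightarrow> nat set \<Rightarrow> nat set" where
 "comb A B = (if A \<inter> B \<noteq> {} then A \<inter> B else A \<union> B)"

definition H :: "nat \<Rightarrow> ptree \<Rightarrow> real \<Rightarrow> nat \<Rightarrow> nat set pmf" where
  "H r T p a = bind_pmf (nr_step r p a) (fd r T)"

lemma fd_Node: "fd r (Node p l q rt) a = bind_pmf (H r l p a) (\<lambda>A. map_pmf (comb A) (H r rt q a))"
proof -
  have "fd r (Node p l q rt) a = bind_pmf (nr_step r p a) (\<lambda>b. bind_pmf (nr_step r q a) (\<lambda>c.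
      bind_pmf (leaf_char r l b) (\<lambda>xs. bind_pmf (leaf_char r rt c) (\<lambda>ys.
         return_pmf (comb (fitch l xs) (fitch rt ys))))))"
    unfolding fd_def
    by (auto simp: map_bind_pmf comb_def Let_def leaf_char_len intro!: bind_pmf_cong)
  also have "\<dots> = bind_pmf (nr_step r p a) (\<lambda>b. bind_pmf (leaf_char r l b) (\<lambda>xs.
      bind_pmf (nr_step r q a) (\<lambda>c. bind_pmf (leaf_char r rt c) (\<lambda>ys.
         return_pmf (comb (fitch l xs) (fitch rt ys))))))"
    by (rule bind_pmf_cong[OF refl]) (rule bind_commute_pmf)
  also have "\<dots> = bind_pmf (H r l p a) (\<lambda>A. map_pmf (comb A) (H r rt q a))"
    unfolding H_def fd_def by (simp add: map_pmf_def bind_assoc_pmf bind_return_pmf)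
  finally show ?thesis .
qed

lemma pmf_nr_step:
  assumes "a < r" "2 \<le> r" "0 \<le> p" "p \<le> 1" "b < r"
  shows "pmf (nr_step r p a) b = (if b = a then 1 - p else p / (real r - 1))"
proof -
  have ne: "{..<r} - {a} \<noteq> {}" using minus_nonempty assms by blast
  have c: "card ({..<r} - {a}) = r - 1" using assms by simp
  have rr: "real (r - 1) = real r - 1" using assms by simp
  have "pmf (nr_step r p a) b = (\<Sum>c\<in>UNIV. pmf (bernoulli_pmf p) c *
      pmf (if c then pmf_of_set ({..<r} - {a}) else return_pmf a) b)"
    unfolding nr_step_def by (rule pmf_bind_fin) auto
  also have "\<dots> = p * pmf (pmf_of_set ({..<r} - {a})) b + (1 - p) * pmf (return_pmf a) b"
    using assms by (simp add: UNIV_bool)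
  also have "\<dots> = (if b = a then 1 - p else p / (real r - 1))"
    using assms ne c rr by (simp add: indicator_def)
  finally show ?thesis .
qed

lemma H_support:
  assumes "a < r" "2 \<le> r"
  shows "set_pmf (H r T p a) \<subseteq> Pow {..<r}"
proof
  fix S assume "S \<in> set_pmf (H r T p a)"
  then obtain b where b: "b \<in> set_pmf (nr_step r p a)" "S \<in> set_pmf (fd r T b)"
    unfolding H_def by (auto simp: set_bind_pmf)
  have "b < r" using nr_step_support[OF assms] b(1) by blast
  then show "S \<in> Pow {..<r}" using fd_support[OF _ assms(2) b(2)] by blast
qed

lemma fd_support': "a < r \<Longrightarrow> 2 \<le> r \<Longrightarrow> set_pmf (fd r T a) \<subseteq> Pow {..<r}"
  using fd_support by blast

lemma pmf_H:
  assumes "a < r" "2 \<le> r" "0 \<le> p" "p \<le> 1"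
  shows "pmf (H r T p a) A = (1-p) * pmf (fd r T a) A
     + p / (real r - 1) * ((\<Sum>b<r. pmf (fd r T b) A) - pmf (fd r T a) A)"
proof -
  have "pmf (H r T p a) A = (\<Sum>b<r. pmf (nr_step r p a) b * pmf (fd r T b) A)"
    unfolding H_def using nr_step_support[OF assms(1,2)] by (simp add: pmf_bind_fin)
  also have "\<dots> = (\<Sum>b<r. (if b = a then 1 - p else p / (real r - 1)) * pmf (fd r T b) A)"
    using pmf_nr_step[OF assms] by simp
  also have "\<dots> = (1-p) * pmf (fd r T a) A + (\<Sum>b\<in>{..<r}-{a}. p / (real r - 1) * pmf (fd r T b) A)"
    using assms by (subst sum.remove[of _ a]) auto
  also have "(\<Sum>b\<in>{..<r}-{a}. p / (real r - 1) * pmf (fd r T b) A)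
       = p / (real r - 1) * (\<Sum>b\<in>{..<r}-{a}. pmf (fd r T b) A)"
    by (rule sum_distrib_left[symmetric])
  also have "(\<Sum>b\<in>{..<r}-{a}. pmf (fd r T b) A) = (\<Sum>b<r. pmf (fd r T b) A) - pmf (fd r T a) A"
    using assms by (simp add: sum_diff1)
  finally show ?thesis .
qed

lemma ring_id: "(1-p)*x + k*(s-x) - ((1-p)*y + k*(s-y)) = (1 - (p+k))*(x-y)" for p x k s y :: real
  by algebra

lemma H_diff:
  assumes "\<alpha> < r" "\<beta> < r" "2 \<le> r" "0 \<le> p" "p \<le> 1"
  shows "pmf (H r T p \<alpha>) A - pmf (H r T p \<beta>) A
     = (1 - p * real r / (real r - 1)) * (pmf (fd r T \<alpha>) A - pmf (fd r T \<beta>) A)"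
proof -
  have "real r - 1 \<noteq> 0" using assms by simp
  then have key: "p * real r / (real r - 1) = p + p / (real r - 1)"
    by (simp add: field_simps)
  show ?thesis
    unfolding pmf_H[OF assms(1,3,4,5)] pmf_H[OF assms(2,3,4,5)] key ring_id ..
qed

lemma coef_nonneg:
  assumes "2 \<le> r" "0 \<le> p" "p \<le> (real r - 1) / real r"
  shows "0 \<le> 1 - p * real r / (real r - 1)"
proof -
  have r: "real r - 1 > 0" "real r > 0" using assms by auto
  have "p * real r \<le> real r - 1" using assms(3) r by (simp add: field_simps)
  then show ?thesis using r by (simp add: field_simps)
qed

lemma coef_pos:
  assumes "2 \<le> r" "p < (real r - 1) / real r"
  shows "0 < 1 - p * real r / (real r - 1)"
proof -
  have r: "real r - 1 > 0" "real r > 0" using assms by auto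
  have "p * real r < real r - 1" using assms(2) r by (simp add: field_simps)
  then show ?thesis using r by (simp add: field_simps)
qed

lemma sw_image_eq: "sw \<alpha> \<beta> ` S = {x. sw \<alpha> \<beta> x \<in> S}"
  by (auto simp: image_iff) (metis sw_sw)

lemma sw_fix:
  assumes "\<alpha> \<in> S \<longleftrightarrow> \<beta> \<in> S"
  shows "sw \<alpha> \<beta> ` S = S"
proof (rule set_eqI)
  fix x
  have "sw \<alpha> \<beta> x \<in> S \<longleftrightarrow> x \<in> S"
  proof (cases "x = \<alpha>")
    case True then show ?thesis using assms by (simp add: sw_def)
  next
    case False
    then show ?thesis using assms by (cases "x = \<beta>") (simp_all add: sw_def)
  qed
  then show "x \<in> sw \<alpha> \<beta> ` S \<longleftrightarrow> x \<in> S" unfolding sw_image_eq by simp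
qed

lemma inj_image_sw: "inj ((`) (sw \<alpha> \<beta>))"
proof (rule injI)
  fix A B assume "sw \<alpha> \<beta> ` A = sw \<alpha> \<beta> ` B"
  then show "A = B" using inj_image_eq_iff[OF inj_sw] by blast
qed

lemma Q_sw:
  assumes "\<alpha> < r" "\<beta> < r" "2 \<le> r"
  shows "pmf (fd r T (sw \<alpha> \<beta> a)) (sw \<alpha> \<beta> ` S) = pmf (fd r T a) S"
  unfolding fd_sw[OF assms] by (rule pmf_map_inj'[OF inj_image_sw])

lemma Q0:
  assumes "\<alpha> < r" "\<beta> < r" "2 \<le> r" "\<alpha> \<in> S \<longleftrightarrow> \<beta> \<in> S"
  shows "pmf (fd r T \<beta>) S = pmf (fd r T \<alpha>) S"
  using Q_sw[OF assms(1-3), of T \<alpha> S] sw_fix[OF assms(4)] by (simp add: sw_def)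


lemma pmf_pair_expand:
  assumes "finite U" "set_pmf M \<subseteq> U" "set_pmf N \<subseteq> U"
  shows "pmf (bind_pmf M (\<lambda>A. map_pmf (g A) N)) S
     = (\<Sum>(A,B)\<in>U\<times>U. pmf M A * (pmf N B * (if g A B = S then 1 else 0)))"
proof -
  have m: "pmf (map_pmf (g A) N) S = (\<Sum>B\<in>U. pmf N B * (if g A B = S then 1 else 0))" for A
    by (simp add: map_pmf_def pmf_bind_fin[OF assms(1,3)] indicator_def of_bool_def)
  show ?thesis
    by (simp add: pmf_bind_fin[OF assms(1,2)] m sum_distrib_left sum.cartesian_product)
qed

lemma comb_type:
  assumes "comb A B = S" "\<alpha> \<in> S" "\<beta> \<notin> S"
  shows "\<not> (\<beta> \<in> A \<and> \<alpha> \<notin> A)" "\<not> (\<beta> \<in> B \<and> \<alpha> \<notin> B)"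
  using assms by (auto simp: comb_def split: if_splits)

lemma node_le:
  fixes \<mu>1 \<nu>1 \<mu>2 \<nu>2 :: "nat set pmf"
  assumes U: "finite U" and su: "set_pmf \<mu>1 \<subseteq> U" "set_pmf \<nu>1 \<subseteq> U" "set_pmf \<mu>2 \<subseteq> U" "set_pmf \<nu>2 \<subseteq> U"
  and P1: "\<And>A. \<alpha> \<in> A \<Longrightarrow> \<beta> \<notin> A \<Longrightarrow> pmf \<nu>1 A \<le> pmf \<mu>1 A"
  and E1: "\<And>A. (\<alpha> \<in> A \<longleftrightarrow> \<beta> \<in> A) \<Longrightarrow> pmf \<nu>1 A = pmf \<mu>1 A"
  and P2: "\<And>A. \<alpha> \<in> A \<Longrightarrow> \<beta> \<notin> A \<Longrightarrow> pmf \<nu>2 A \<le> pmf \<mu>2 A"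
  and E2: "\<And>A. (\<alpha> \<in> A \<longleftrightarrow> \<beta> \<in> A) \<Longrightarrow> pmf \<nu>2 A = pmf \<mu>2 A"
  and S: "\<alpha> \<in> S" "\<beta> \<notin> S"
  shows "pmf (bind_pmf \<nu>1 (\<lambda>A. map_pmf (comb A) \<nu>2)) S \<le> pmf (bind_pmf \<mu>1 (\<lambda>A. map_pmf (comb A) \<mu>2)) S"
  unfolding pmf_pair_expand[OF U su(2,4)] pmf_pair_expand[OF U su(1,3)]
proof (rule sum_mono, clarify)
  fix A B
  show "pmf \<nu>1 A * (pmf \<nu>2 B * (if comb A B = S then 1 else 0))
     \<le> pmf \<mu>1 A * (pmf \<mu>2 B * (if comb A B = S then 1 else 0))"
  proof (cases "comb A B = S")
    case True
    have a: "pmf \<nu>1 A \<le> pmf \<mu>1 A"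
      using comb_type(1)[OF True S] P1 E1 by (metis order.refl)
    have b: "pmf \<nu>2 B \<le> pmf \<mu>2 B"
      using comb_type(2)[OF True S] P2 E2 by (metis order.refl)
    show ?thesis using True a b by (simp add: mult_mono)
  qed simp
qed

lemma node_lt:
  fixes \<mu>1 \<nu>1 \<mu>2 \<nu>2 :: "nat set pmf"
  assumes U: "finite U" and su: "set_pmf \<mu>1 \<subseteq> U" "set_pmf \<nu>1 \<subseteq> U" "set_pmf \<mu>2 \<subseteq> U" "set_pmf \<nu>2 \<subseteq> U"
  and P1: "\<And>A. \<alpha> \<in> A \<Longrightarrow> \<beta> \<notin> A \<Longrightarrow> pmf \<nu>1 A \<le> pmf \<mu>1 A"
  and E1: "\<And>A. (\<alpha> \<in> A \<longleftrightarrow> \<beta> \<in> A) \<Longrightarrow> pmf \<nu>1 A = pmf \<mu>1 A"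
  and P2: "\<And>A. \<alpha> \<in> A \<Longrightarrow> \<beta> \<notin> A \<Longrightarrow> pmf \<nu>2 A \<le> pmf \<mu>2 A"
  and E2: "\<And>A. (\<alpha> \<in> A \<longleftrightarrow> \<beta> \<in> A) \<Longrightarrow> pmf \<nu>2 A = pmf \<mu>2 A"
  and L1: "pmf \<nu>1 {\<alpha>} < pmf \<mu>1 {\<alpha>}" and L2: "pmf \<nu>2 {\<alpha>} < pmf \<mu>2 {\<alpha>}"
  and inU: "{\<alpha>} \<in> U" and ne: "\<alpha> \<noteq> \<beta>"
  shows "pmf (bind_pmf \<nu>1 (\<lambda>A. map_pmf (comb A) \<nu>2)) {\<alpha>} < pmf (bind_pmf \<mu>1 (\<lambda>A. map_pmf (comb A) \<mu>2)) {\<alpha>}"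
  unfolding pmf_pair_expand[OF U su(2,4)] pmf_pair_expand[OF U su(1,3)]
proof (rule sum_strict_mono_ex1[OF finite_cartesian_product[OF U U]])
  have S: "\<alpha> \<in> {\<alpha>}" "\<beta> \<notin> {\<alpha>}" using ne by auto
  show "\<forall>x\<in>U \<times> U. (case x of (A, B) \<Rightarrow> pmf \<nu>1 A * (pmf \<nu>2 B * (if comb A B = {\<alpha>} then 1 else 0)))
     \<le> (case x of (A, B) \<Rightarrow> pmf \<mu>1 A * (pmf \<mu>2 B * (if comb A B = {\<alpha>} then 1 else 0)))"
  proof (clarify)
    fix A B
    show "pmf \<nu>1 A * (pmf \<nu>2 B * (if comb A B = {\<alpha>} then 1 else 0))
       \<le> pmf \<mu>1 A * (pmf \<mu>2 B * (if comb A B = {\<alpha>} then 1 else 0))"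
    proof (cases "comb A B = {\<alpha>}")
      case True
      have a: "pmf \<nu>1 A \<le> pmf \<mu>1 A"
        using comb_type(1)[OF True S] P1 E1 by (metis order.refl)
      have b: "pmf \<nu>2 B \<le> pmf \<mu>2 B"
        using comb_type(2)[OF True S] P2 E2 by (metis order.refl)
      show ?thesis using True a b by (simp add: mult_mono)
    qed simp
  qed
  have "pmf \<nu>1 {\<alpha>} * pmf \<nu>2 {\<alpha>} < pmf \<mu>1 {\<alpha>} * pmf \<mu>2 {\<alpha>}"
    using L1 L2 by (intro mult_strict_mono) (auto intro: le_less_trans[OF pmf_nonneg])
  then show "\<exists>x\<in>U \<times> U. (case x of (A, B) \<Rightarrow> pmf \<nu>1 A * (pmf \<nu>2 B * (if comb A B = {\<alpha>} then 1 else 0)))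
     < (case x of (A, B) \<Rightarrow> pmf \<mu>1 A * (pmf \<mu>2 B * (if comb A B = {\<alpha>} then 1 else 0)))"
    using inU by (intro bexI[of _ "({\<alpha>},{\<alpha>})"]) (auto simp: comb_def)
qed

lemma fd_Leaf: "fd r Leaf a = return_pmf {a}"
  by (simp add: fd_def)

lemma main:
  assumes r: "2 \<le> r" "\<alpha> < r" "\<beta> < r" "\<alpha> \<noteq> \<beta>"
  shows "(\<forall>p\<in>edge_probs T. 0 \<le> p \<and> p \<le> (real r - 1) / real r) \<Longrightarrow>
     (\<forall>S. \<alpha> \<in> S \<longrightarrow> \<beta> \<notin> S \<longrightarrow> pmf (fd r T \<beta>) S \<le> pmf (fd r T \<alpha>) S) \<and>
     ((\<forall>p\<in>edge_probs T. p < (real r - 1) / real r) \<longrightarrow> pmf (fd r T \<beta>) {\<alpha>} < pmf (fd r T \<alpha>) {\<alpha>})"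
proof (induction T)
  case Leaf
  then show ?case using r by (auto simp: fd_Leaf indicator_def)
next
  case (Node p l q rt)
  have le1: "(real r - 1) / real r \<le> 1" using r by simp
  have p: "0 \<le> p" "p \<le> (real r - 1) / real r" "0 \<le> q" "q \<le> (real r - 1) / real r"
    using Node.prems by auto
  have IHl: "\<forall>S. \<alpha> \<in> S \<longrightarrow> \<beta> \<notin> S \<longrightarrow> pmf (fd r l \<beta>) S \<le> pmf (fd r l \<alpha>) S"
     "(\<forall>p\<in>edge_probs l. p < (real r - 1) / real r) \<longrightarrow> pmf (fd r l \<beta>) {\<alpha>} < pmf (fd r l \<alpha>) {\<alpha>}"
    using Node.IH(1) Node.prems by auto
  have IHr: "\<forall>S. \<alpha> \<in> S \<longrightarrow> \<beta> \<notin> S \<longrightarrow> pmf (fd r rt \<beta>) S \<le> pmf (fd r rt \<alpha>) S"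
     "(\<forall>p\<in>edge_probs rt. p < (real r - 1) / real r) \<longrightarrow> pmf (fd r rt \<beta>) {\<alpha>} < pmf (fd r rt \<alpha>) {\<alpha>}"
    using Node.IH(2) Node.prems by auto
  have Hd: "\<And>t s A. 0 \<le> s \<Longrightarrow> s \<le> (real r - 1) / real r \<Longrightarrow> pmf (H r t s \<alpha>) A - pmf (H r t s \<beta>) A
     = (1 - s * real r / (real r - 1)) * (pmf (fd r t \<alpha>) A - pmf (fd r t \<beta>) A)"
    using H_diff[OF r(2,3,1)] le1 by (meson order.trans)
  have P: "pmf (H r t s \<beta>) A \<le> pmf (H r t s \<alpha>) A"
    if "0 \<le> s" "s \<le> (real r - 1) / real r" "\<forall>S. \<alpha> \<in> S \<longrightarrow> \<beta> \<notin> S \<longrightarrow> pmf (fd r t \<beta>) S \<le> pmf (fd r t \<alpha>) S"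
      "\<alpha> \<in> A" "\<beta> \<notin> A" for t s A
  proof -
    have "0 \<le> (1 - s * real r / (real r - 1)) * (pmf (fd r t \<alpha>) A - pmf (fd r t \<beta>) A)"
      using coef_nonneg[OF r(1) that(1,2)] that(3-5) by simp
    then show ?thesis using Hd[OF that(1,2), of t A] by linarith
  qed
  have E: "pmf (H r t s \<beta>) A = pmf (H r t s \<alpha>) A"
    if "0 \<le> s" "s \<le> (real r - 1) / real r" "\<alpha> \<in> A \<longleftrightarrow> \<beta> \<in> A" for t s A
    using Hd[OF that(1,2), of t A] Q0[OF r(2,3,1) that(3)] by simp
  have L: "pmf (H r t s \<beta>) {\<alpha>} < pmf (H r t s \<alpha>) {\<alpha>}"
    if "0 \<le> s" "s < (real r - 1) / real r" "pmf (fd r t \<beta>) {\<alpha>} < pmf (fd r t \<alpha>) {\<alpha>}" for t s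
  proof -
    have "0 < (1 - s * real r / (real r - 1)) * (pmf (fd r t \<alpha>) {\<alpha>} - pmf (fd r t \<beta>) {\<alpha>})"
      using coef_pos[OF r(1) that(2)] that(3) by simp
    then show ?thesis using Hd[OF that(1) less_imp_le[OF that(2)], of t "{\<alpha>}"] by linarith
  qed
  have U: "finite (Pow {..<r})" by simp
  have su: "set_pmf (H r l p \<alpha>) \<subseteq> Pow {..<r}" "set_pmf (H r l p \<beta>) \<subseteq> Pow {..<r}"
     "set_pmf (H r rt q \<alpha>) \<subseteq> Pow {..<r}" "set_pmf (H r rt q \<beta>) \<subseteq> Pow {..<r}"
    using H_support r by auto
  have part1: "\<forall>S. \<alpha> \<in> S \<longrightarrow> \<beta> \<notin> S \<longrightarrow> pmf (fd r (Node p l q rt) \<beta>) S \<le> pmf (fd r (Node p l q rt) \<alpha>) S"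
    unfolding fd_Node
    by (intro allI impI node_le[OF U su]) (auto intro: P[OF p(1,2) IHl(1)] E[OF p(1,2)] P[OF p(3,4) IHr(1)] E[OF p(3,4)])
  have part2: "pmf (fd r (Node p l q rt) \<beta>) {\<alpha>} < pmf (fd r (Node p l q rt) \<alpha>) {\<alpha>}"
    if st: "\<forall>p\<in>edge_probs (Node p l q rt). p < (real r - 1) / real r"
  proof -
    have s: "p < (real r - 1) / real r" "q < (real r - 1) / real r" using st by auto
    have l1: "pmf (fd r l \<beta>) {\<alpha>} < pmf (fd r l \<alpha>) {\<alpha>}" using IHl(2) st by auto
    have l2: "pmf (fd r rt \<beta>) {\<alpha>} < pmf (fd r rt \<alpha>) {\<alpha>}" using IHr(2) st by auto
    show ?thesis unfolding fd_Node
      by (rule node_lt[OF U su P[OF p(1,2) IHl(1)] E[OF p(1,2)] P[OF p(3,4) IHr(1)] E[OF p(3,4)]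
          L[OF p(1) s(1) l1] L[OF p(3) s(2) l2]]) (use r in auto)
  qed
  show ?case using part1 part2 by blast
qed


definition w :: "nat \<Rightarrow> nat set \<Rightarrow> real" where
  "w x S = (if x \<in> S then 1 / real (card S) else 0)"

definition G :: "nat \<Rightarrow> ptree \<Rightarrow> nat \<Rightarrow> nat \<Rightarrow> real" where
  "G r T g x = pmf (bind_pmf (fd r T g) pmf_of_set) x"

lemma G_sum:
  assumes "g < r" "2 \<le> r"
  shows "G r T g x = (\<Sum>S\<in>Pow {..<r}. pmf (fd r T g) S * w x S)"
  unfolding G_def
proof (subst pmf_bind_fin[OF _ fd_support'[OF assms]], simp, rule sum.cong[OF refl])
  fix S assume "S \<in> Pow {..<r}"
  show "pmf (fd r T g) S * pmf (pmf_of_set S) x = pmf (fd r T g) S * w x S"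
  proof (cases "S \<in> set_pmf (fd r T g)")
    case True
    then have "S \<noteq> {}" "finite S" using fd_support[OF assms True] finite_subset by auto
    then show ?thesis by (simp add: w_def indicator_def)
  next
    case False
    then show ?thesis by (simp add: set_pmf_eq)
  qed
qed

lemma sw_Pow: "\<alpha> < r \<Longrightarrow> \<beta> < r \<Longrightarrow> S \<in> Pow {..<r} \<Longrightarrow> sw \<alpha> \<beta> ` S \<in> Pow {..<r}"
  by (auto simp: sw_def)

lemma G_symm:
  assumes "\<alpha> < r" "\<beta> < r" "2 \<le> r"
  shows "G r T \<alpha> \<beta> = G r T \<beta> \<alpha>"
proof -
  have "G r T \<alpha> \<beta> = (\<Sum>S\<in>Pow {..<r}. pmf (fd r T \<alpha>) S * w \<beta> S)" by (rule G_sum[OF assms(1,3)])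
  also have "\<dots> = (\<Sum>S\<in>Pow {..<r}. pmf (fd r T \<beta>) S * w \<alpha> S)"
  proof (rule sum.reindex_bij_witness[where i="(`) (sw \<alpha> \<beta>)" and j="(`) (sw \<alpha> \<beta>)"])
    fix S assume S: "S \<in> Pow {..<r}"
    show "sw \<alpha> \<beta> ` sw \<alpha> \<beta> ` S = S" by (simp add: image_image)
    show "sw \<alpha> \<beta> ` S \<in> Pow {..<r}" using sw_Pow[OF assms(1,2) S] .
    have q: "pmf (fd r T \<beta>) (sw \<alpha> \<beta> ` S) = pmf (fd r T \<alpha>) S"
      using Q_sw[OF assms, of T \<alpha> S] by (simp add: sw_def)
    have c: "card (sw \<alpha> \<beta> ` S) = card S" by (rule card_image) (meson inj_sw inj_on_subset subset_UNIV)
    have m: "(\<alpha> \<in> sw \<alpha> \<beta> ` S) = (\<beta> \<in> S)" by (auto simp: sw_image_eq sw_def)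
    show "pmf (fd r T \<beta>) (sw \<alpha> \<beta> ` S) * w \<alpha> (sw \<alpha> \<beta> ` S) = pmf (fd r T \<alpha>) S * w \<beta> S"
      using q c m by (simp add: w_def)
  next
    fix S assume S: "S \<in> Pow {..<r}"
    show "sw \<alpha> \<beta> ` sw \<alpha> \<beta> ` S = S" by (simp add: image_image)
    show "sw \<alpha> \<beta> ` S \<in> Pow {..<r}" using sw_Pow[OF assms(1,2) S] .
  qed
  also have "\<dots> = G r T \<beta> \<alpha>" by (rule G_sum[OF assms(2,3), symmetric])
  finally show ?thesis .
qed

lemma G_le:
  assumes "\<alpha> < r" "\<beta> < r" "2 \<le> r" "\<alpha> \<noteq> \<beta>"
    and ep: "\<forall>p\<in>edge_probs T. 0 \<le> p \<and> p \<le> (real r - 1) / real r"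
  shows "G r T \<alpha> \<beta> \<le> G r T \<alpha> \<alpha>"
    "(\<forall>p\<in>edge_probs T. p < (real r - 1) / real r) \<Longrightarrow> G r T \<alpha> \<beta> < G r T \<alpha> \<alpha>"
proof -
  note M = main[OF assms(3,1,2,4) ep]
  have t: "pmf (fd r T \<beta>) S * w \<alpha> S \<le> pmf (fd r T \<alpha>) S * w \<alpha> S" for S
  proof (cases "\<alpha> \<in> S")
    case True
    have wn: "0 \<le> w \<alpha> S" by (simp add: w_def)
    show ?thesis
    proof (cases "\<beta> \<in> S")
      case True
      then show ?thesis using Q0[OF assms(1-3), of S T] \<open>\<alpha> \<in> S\<close> by simp
    next
      case False
      then show ?thesis using M \<open>\<alpha> \<in> S\<close> wn by (simp add: mult_right_mono)
    qed
  qed (simp add: w_def)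
  show "G r T \<alpha> \<beta> \<le> G r T \<alpha> \<alpha>"
    unfolding G_symm[OF assms(1-3)] unfolding G_sum[OF assms(2,3)] G_sum[OF assms(1,3)]
    by (rule sum_mono) (rule t)
  assume st: "\<forall>p\<in>edge_probs T. p < (real r - 1) / real r"
  show "G r T \<alpha> \<beta> < G r T \<alpha> \<alpha>"
    unfolding G_symm[OF assms(1-3)] unfolding G_sum[OF assms(2,3)] G_sum[OF assms(1,3)]
  proof (rule sum_strict_mono_ex1)
    show "\<exists>a\<in>Pow {..<r}. pmf (fd r T \<beta>) a * w \<alpha> a < pmf (fd r T \<alpha>) a * w \<alpha> a"
      using M st assms(1) by (intro bexI[of _ "{\<alpha>}"]) (auto simp: w_def)
  qed (auto intro: t)
qed


theorem corollary3:
  fixes T :: ptree and r :: nat and \<alpha> :: nat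
  assumes "r \<ge> 2" and "T \<noteq> Leaf" and "\<alpha> < r"
    and "\<forall>p \<in> edge_probs T. 0 \<le> p \<and> p \<le> (real r - 1) / real r"
  shows "RA_MP r T \<alpha> \<ge> 1 / real r
    \<and> ((\<forall>p \<in> edge_probs T. p < (real r - 1) / real r) \<longrightarrow> RA_MP r T \<alpha> > 1 / real r)"
proof -
  have rpos: "real r > 0" using assms(1) by simp
  have RA: "RA_MP r T \<alpha> = G r T \<alpha> \<alpha>"
    unfolding RA_MP_def G_def fd_def by (simp add: bind_map_pmf)
  have supp: "set_pmf (bind_pmf (fd r T \<alpha>) pmf_of_set) \<subseteq> {..<r}"
  proof
    fix x assume "x \<in> set_pmf (bind_pmf (fd r T \<alpha>) pmf_of_set)"
    then obtain S where S: "S \<in> set_pmf (fd r T \<alpha>)" "x \<in> set_pmf (pmf_of_set S)"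
      by (auto simp: set_bind_pmf)
    have "S \<subseteq> {..<r}" "S \<noteq> {}" using fd_support[OF assms(3,1) S(1)] by auto
    moreover then have "finite S" using finite_subset by blast
    ultimately show "x \<in> {..<r}" using S(2) by auto
  qed
  have sum1: "(\<Sum>x<r. G r T \<alpha> x) = 1"
    unfolding G_def by (rule sum_pmf_eq_1[OF _ supp]) simp
  have le: "G r T \<alpha> x \<le> G r T \<alpha> \<alpha>" if "x < r" for x
    using G_le(1)[OF assms(3) that assms(1) _ assms(4)] by (cases "x = \<alpha>") auto
  have s: "(\<Sum>x<r. G r T \<alpha> \<alpha>) = real r * G r T \<alpha> \<alpha>" by simp
  have "1 \<le> real r * G r T \<alpha> \<alpha>"
    using sum_mono[of "{..<r}" "G r T \<alpha>" "\<lambda>_. G r T \<alpha> \<alpha>"] le sum1 s by simp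
  then have A: "1 / real r \<le> RA_MP r T \<alpha>" using rpos RA by (simp add: divide_le_eq mult.commute)
  have B: "1 / real r < RA_MP r T \<alpha>" if st: "\<forall>p \<in> edge_probs T. p < (real r - 1) / real r"
  proof -
    define x0 where "x0 = (if \<alpha> = 0 then 1 else 0::nat)"
    have x0: "x0 < r" "x0 \<noteq> \<alpha>" using assms(1,3) by (auto simp: x0_def)
    have "(\<Sum>x<r. G r T \<alpha> x) < (\<Sum>x<r. G r T \<alpha> \<alpha>)"
      by (rule sum_strict_mono_ex1)
         (use le x0 G_le(2)[OF assms(3) x0(1) assms(1) x0(2)[symmetric] assms(4) st] in auto)
    then have "1 < real r * G r T \<alpha> \<alpha>" using sum1 s by simp
    then show ?thesis using rpos RA by (simp add: divide_less_eq mult.commute)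
  qed
  show ?thesis using A B by blast
qed

end
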